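(* Let $X$ and $Y$ be real Banach spaces with $Y$ a dual Banach space, let $\mathcal{M}:\ell^{\infty}(X,Y)\to Y$ be a generalized invariant mean, and let $P_X^Y:Lip_0(X,Y)\to L(X,Y)$ be defined by $P_X^Y(f)(z)=\mathcal{M}(\phi_f(z))$ for $f\in Lip_0(X,Y)$, $z\in X$, where $\phi_f(z)\in\ell^\infty(X,Y)$ is the map $x\mapsto f(z+x)-f(x)$. Then $Lip_0(X,Y)$ is topologically isomorphic to $L(X,Y)\oplus_1\ker(P_X^Y)$, via $f\mapsto (P_X^Y(f), f-P_X^Y(f))$.
   Context: $Lip_0(X,Y)$ is the Banach space of Lipschitz maps $f:X\to Y$ with $f(0)=0$ and norm $Lip(f)=\sup_{x\neq y}\|f(x)-f(y)\|/\|x-y\|$; $L(X,Y)$ is the space of bounded linear operators with the operator norm, a closed subspace of $Lip_0(X,Y)$. $\ell^\infty(X,Y)$ is the Banach space of bounded maps $X\to Y$ with the sup norm. A generalized invariant mean is a norm-one linear operator $\mathcal{M}:\ell^\infty(X,Y)\to Y$ such that $\mathcal{M}(g_x)=\mathcal{M}(g)$ for all $g\in\ell^\infty(X,Y)$, $x\in X$, where $g_x(z)=g(x+z)$, and $\mathcal{M}(\hat y)=y$ for every $y\in Y$, where $\hat y$ is the constant map with value $y$ (such an operator exists when $Y$ is a dual space). With these, $P_X^Y$ is a well-defined map into $L(X,Y)$. The space $L(X,Y)\oplus_1\ker(P_X^Y)$ carries the norm $\|(T,g)\|=\|T\|+Lip(g)$. *)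

theory Defs
  imports "HOL-Analysis.Analysis"
begin

definition lipnorm :: "('a::real_normed_vector \<Rightarrow> 'b::real_normed_vector) \<Rightarrow> real" where
  "lipnorm f = Sup (insert 0 {norm (f x - f y) / norm (x - y) | x y. x \<noteq> y})"

definition Lip0 :: "('a::real_normed_vector \<Rightarrow> 'b::real_normed_vector) set" where
  "Lip0 = {f. f 0 = 0 \<and> (\<exists>C. C-lipschitz_on UNIV f)}"

definition Lin :: "('a::real_normed_vector \<Rightarrow> 'b::real_normed_vector) set" where
  "Lin = {T. bounded_linear T}"

definition linf :: "('a \<Rightarrow> 'b::real_normed_vector) set" where
  "linf = {g. bounded (range g)}"

definition supn :: "('a \<Rightarrow> 'b::real_normed_vector) \<Rightarrow> real" where
  "supn g = Sup (insert 0 (range (\<lambda>x. norm (g x))))"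

text \<open>Y is a dual Banach space: isometrically isomorphic to the dual of the Banach space 'z.\<close>
definition dual_space_via :: "('b::real_normed_vector \<Rightarrow> ('z::banach \<Rightarrow>\<^sub>L real)) \<Rightarrow> bool" where
  "dual_space_via J \<longleftrightarrow> linear J \<and> bij J \<and> (\<forall>y. norm (J y) = norm y)"

definition gen_inv_mean :: "((('a::real_normed_vector) \<Rightarrow> 'b::real_normed_vector) \<Rightarrow> 'b) \<Rightarrow> bool" where
  "gen_inv_mean M \<longleftrightarrow>
     (\<forall>g\<in>linf. \<forall>h\<in>linf. \<forall>a b::real. M (\<lambda>x. a *\<^sub>R g x + b *\<^sub>R h x) = a *\<^sub>R M g + b *\<^sub>R M h)
   \<and> (\<forall>g\<in>linf. norm (M g) \<le> supn g)
   \<and> Sup (insert 0 {norm (M g) / supn g | g. g \<in> linf \<and> g \<noteq> (\<lambda>_. 0)}) = 1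
   \<and> (\<forall>g\<in>linf. \<forall>x. M (\<lambda>z. g (x + z)) = M g)
   \<and> (\<forall>y. M (\<lambda>_. y) = y)"

definition PXY :: "((('a::real_normed_vector) \<Rightarrow> 'b::real_normed_vector) \<Rightarrow> 'b) \<Rightarrow> ('a \<Rightarrow> 'b) \<Rightarrow> ('a \<Rightarrow> 'b)" where
  "PXY M f = (\<lambda>z. M (\<lambda>x. f (z + x) - f x))"

definition kerP :: "((('a::real_normed_vector) \<Rightarrow> 'b::real_normed_vector) \<Rightarrow> 'b) \<Rightarrow> ('a \<Rightarrow> 'b) set" where
  "kerP M = {g \<in> Lip0. PXY M g = (\<lambda>_. 0)}"

definition sum1norm :: "('a::real_normed_vector \<Rightarrow> 'b::real_normed_vector) \<times> ('a \<Rightarrow> 'b) \<Rightarrow> real" where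
  "sum1norm p = onorm (fst p) + lipnorm (snd p)"

end

theory Submission
  imports Defs
begin

definition lipb :: "('a::real_normed_vector \<Rightarrow> 'b::real_normed_vector) \<Rightarrow> bool" where
  "lipb f \<longleftrightarrow> (\<exists>C\<ge>0. \<forall>x y. norm (f x - f y) \<le> C * norm (x - y))"

lemma Lip0_iff: "f \<in> Lip0 \<longleftrightarrow> f 0 = 0 \<and> lipb f"
  unfolding Lip0_def lipb_def lipschitz_on_def dist_norm by auto

lemma lipnorm_le:
  assumes "0 \<le> C" "\<And>x y. norm (f x - f y) \<le> C * norm (x - y)"
  shows "lipnorm f \<le> C"
  unfolding lipnorm_def
proof (rule cSup_least)
  show "insert 0 {norm (f x - f y) / norm (x - y) |x y. x \<noteq> y} \<noteq> {}" by simp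
  fix r assume "r \<in> insert 0 {norm (f x - f y) / norm (x - y) |x y. x \<noteq> y}"
  then show "r \<le> C"
  proof
    assume "r = 0" then show ?thesis using assms by simp
  next
    assume "r \<in> {norm (f x - f y) / norm (x - y) |x y. x \<noteq> y}"
    then obtain x y where "x \<noteq> y" "r = norm (f x - f y) / norm (x - y)" by auto
    then show ?thesis using assms(2)[of x y] by (simp add: pos_divide_le_eq)
  qed
qed

lemma lipnorm_ge:
  assumes "lipb f"
  shows "norm (f x - f y) \<le> lipnorm f * norm (x - y)" and "0 \<le> lipnorm f"
proof -
  obtain C where C: "0 \<le> C" "\<And>x y. norm (f x - f y) \<le> C * norm (x - y)"
    using assms unfolding lipb_def by blast
  let ?S = "insert 0 {norm (f x - f y) / norm (x - y) |x y. x \<noteq> y}"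
  have bdd: "bdd_above ?S"
  proof (rule bdd_aboveI)
    fix r assume "r \<in> ?S"
    then show "r \<le> C"
    proof
      assume "r = 0" then show ?thesis using C by simp
    next
      assume "r \<in> {norm (f x - f y) / norm (x - y) |x y. x \<noteq> y}"
      then obtain x y where "x \<noteq> y" "r = norm (f x - f y) / norm (x - y)" by auto
      then show ?thesis using C(2)[of x y] by (simp add: pos_divide_le_eq)
    qed
  qed
  show "0 \<le> lipnorm f" unfolding lipnorm_def by (rule cSup_upper[OF _ bdd]) simp
  show "norm (f x - f y) \<le> lipnorm f * norm (x - y)"
  proof (cases "x = y")
    case True then show ?thesis by simp
  next
    case False
    have "norm (f x - f y) / norm (x - y) \<le> lipnorm f"
      unfolding lipnorm_def by (rule cSup_upper[OF _ bdd]) (use False in blast)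
    then show ?thesis using False by (simp add: pos_divide_le_eq)
  qed
qed

lemma lipb_comb:
  assumes "lipb f" "lipb g"
  shows "lipb (\<lambda>x. a *\<^sub>R f x + b *\<^sub>R g x)"
proof -
  obtain C where C: "0 \<le> C" "\<And>x y. norm (f x - f y) \<le> C * norm (x - y)"
    using assms unfolding lipb_def by blast
  obtain D where D: "0 \<le> D" "\<And>x y. norm (g x - g y) \<le> D * norm (x - y)"
    using assms unfolding lipb_def by blast
  show ?thesis unfolding lipb_def
  proof (intro exI[of _ "\<bar>a\<bar> * C + \<bar>b\<bar> * D"] conjI allI)
    show "0 \<le> \<bar>a\<bar> * C + \<bar>b\<bar> * D" using C D by simp
    fix x y
    have "norm (a *\<^sub>R f x + b *\<^sub>R g x - (a *\<^sub>R f y + b *\<^sub>R g y))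
        = norm (a *\<^sub>R (f x - f y) + b *\<^sub>R (g x - g y))" by (simp add: algebra_simps)
    also have "\<dots> \<le> \<bar>a\<bar> * norm (f x - f y) + \<bar>b\<bar> * norm (g x - g y)"
      using norm_triangle_ineq[of "a *\<^sub>R (f x - f y)" "b *\<^sub>R (g x - g y)"] by simp
    also have "\<dots> \<le> \<bar>a\<bar> * (C * norm (x - y)) + \<bar>b\<bar> * (D * norm (x - y))"
      by (intro add_mono mult_left_mono C D) auto
    also have "\<dots> = (\<bar>a\<bar> * C + \<bar>b\<bar> * D) * norm (x - y)"
      by (simp add: distrib_right)
    finally show "norm (a *\<^sub>R f x + b *\<^sub>R g x - (a *\<^sub>R f y + b *\<^sub>R g y)) \<le> (\<bar>a\<bar> * C + \<bar>b\<bar> * D) * norm (x - y)" .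
  qed
qed

lemma lipb_bl: "bounded_linear T \<Longrightarrow> lipb T"
  unfolding lipb_def
proof (intro exI[of _ "onorm T"] conjI allI)
  assume T: "bounded_linear T"
  show "0 \<le> onorm T" using onorm_pos_le[OF T] .
  fix x y
  have "T x - T y = T (x - y)" using T by (simp add: linear_simps)
  then show "norm (T x - T y) \<le> onorm T * norm (x - y)" using onorm[OF T] by simp
qed

lemma supn_le: "(\<And>x. norm (g x) \<le> B) \<Longrightarrow> 0 \<le> B \<Longrightarrow> supn g \<le> B"
  unfolding supn_def by (rule cSup_least) auto

lemma linf_shift: "g \<in> linf \<Longrightarrow> (\<lambda>x. g (w + x)) \<in> linf"
proof -
  assume "g \<in> linf"
  then have "bounded (range g)" unfolding linf_def by simp
  moreover have "range (\<lambda>x. g (w + x)) \<subseteq> range g" by auto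
  ultimately show ?thesis unfolding linf_def using bounded_subset by blast
qed

lemma additive_zero:
  fixes h :: "real \<Rightarrow> 'b::real_normed_vector"
  assumes add: "\<And>x y. h (x + y) = h x + h y"
    and bd: "\<And>c. norm (h c) \<le> K * \<bar>c\<bar>" and h1: "h 1 = 0"
  shows "h c = 0"
proof -
  have h0: "h 0 = 0" using add[of 0 0] by simp
  have hn: "h (real n * x) = real n *\<^sub>R h x" for n x
  proof (induction n)
    case 0 then show ?case using h0 by simp
  next
    case (Suc n)
    have "real (Suc n) * x = real n * x + x" by (simp add: distrib_right)
    then have "h (real (Suc n) * x) = h (real n * x) + h x" using add by simp
    then show ?case using Suc by (simp add: scaleR_left_distrib)
  qed
  have hneg: "h (- x) = - h x" for x
  proof -
    have "h x + h (- x) = 0" using add[of x "-x"] h0 by simp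
    then show ?thesis by (simp add: eq_neg_iff_add_eq_0 add.commute)
  qed
  have hint: "h (of_int m) = 0" for m
  proof (cases "m \<ge> 0")
    case True
    then have e: "of_int m = real (nat m) * 1" by simp
    show ?thesis unfolding e hn h1 by simp
  next
    case False
    then have e: "of_int m = - (real (nat (-m)) * 1)" by simp
    show ?thesis unfolding e hneg hn h1 by simp
  qed
  have K0: "0 \<le> K" using bd[of 1] h1 by simp
  have nb: "real n * norm (h c) \<le> K" for n
  proof -
    define t where "t = real n * c"
    define r where "r = t - of_int \<lfloor>t\<rfloor>"
    have "h t = h (of_int \<lfloor>t\<rfloor> + r)" by (simp add: r_def)
    also have "\<dots> = h r" using add hint by simp
    finally have "norm (h t) \<le> K * \<bar>r\<bar>" using bd[of r] by simp
    also have "\<dots> \<le> K * 1"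
      by (intro mult_left_mono K0) (use of_int_floor_le[of t] real_of_int_floor_add_one_gt[of t] in \<open>unfold r_def; linarith\<close>)
    finally show ?thesis using hn[of n c] by (simp add: t_def)
  qed
  show ?thesis
  proof (rule ccontr)
    assume "h c \<noteq> 0"
    then have p: "norm (h c) > 0" by simp
    obtain n where "K / norm (h c) < real n" using reals_Archimedean2 by blast
    then have "K < real n * norm (h c)" using p by (simp add: pos_divide_less_eq)
    then show False using nb[of n] by simp
  qed
qed

context
  fixes M :: "('a::real_normed_vector \<Rightarrow> 'b::real_normed_vector) \<Rightarrow> 'b"
  assumes gim: "gen_inv_mean M"
begin

lemma M_lin: "g \<in> linf \<Longrightarrow> h \<in> linf \<Longrightarrow> M (\<lambda>x. a *\<^sub>R g x + b *\<^sub>R h x) = a *\<^sub>R M g + b *\<^sub>R M h"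
  using gim unfolding gen_inv_mean_def by blast

lemma M_norm: "g \<in> linf \<Longrightarrow> norm (M g) \<le> supn g"
  using gim unfolding gen_inv_mean_def by blast

lemma M_shift: "g \<in> linf \<Longrightarrow> M (\<lambda>z. g (x + z)) = M g"
  using gim unfolding gen_inv_mean_def by blast

lemma M_const: "M (\<lambda>_. y) = y"
  using gim unfolding gen_inv_mean_def by blast

lemma phi_bound:
  assumes "lipb f"
  shows "norm (f (z + x) - f x) \<le> lipnorm f * norm z"
  using lipnorm_ge(1)[OF assms, of "z + x" x] by simp

lemma phi_linf:
  assumes "lipb f"
  shows "(\<lambda>x. f (z + x) - f x) \<in> linf"
  unfolding linf_def bounded_iff using phi_bound[OF assms] by blast

lemma P_bound:
  assumes "lipb f"
  shows "norm (PXY M f z) \<le> lipnorm f * norm z"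
proof -
  have "norm (PXY M f z) \<le> supn (\<lambda>x. f (z + x) - f x)"
    unfolding PXY_def by (rule M_norm[OF phi_linf[OF assms]])
  also have "\<dots> \<le> lipnorm f * norm z"
    by (rule supn_le) (use phi_bound[OF assms] lipnorm_ge(2)[OF assms] in auto)
  finally show ?thesis .
qed

lemma P_add:
  assumes "lipb f"
  shows "PXY M f (z + w) = PXY M f z + PXY M f w"
proof -
  let ?g = "\<lambda>x. f (z + x) - f x" and ?h = "\<lambda>x. f (w + x) - f x"
  have e: "(\<lambda>x. f (z + w + x) - f x) = (\<lambda>x. 1 *\<^sub>R ?g (w + x) + 1 *\<^sub>R ?h x)"
    by (simp add: add.assoc)
  have "PXY M f (z + w) = 1 *\<^sub>R M (\<lambda>x. ?g (w + x)) + 1 *\<^sub>R M ?h"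
    unfolding PXY_def e
    by (rule M_lin[OF linf_shift[OF phi_linf[OF assms]] phi_linf[OF assms]])
  also have "\<dots> = M ?g + M ?h"
  proof -
    have "M (\<lambda>x. ?g (w + x)) = M ?g" by (rule M_shift[OF phi_linf[OF assms]])
    then show ?thesis by simp
  qed
  finally show ?thesis unfolding PXY_def .
qed

lemma P_bl:
  assumes "lipb f"
  shows "bounded_linear (PXY M f)"
proof (rule bounded_linear_intro)
  show "PXY M f (x + y) = PXY M f x + PXY M f y" for x y by (rule P_add[OF assms])
  show "norm (PXY M f x) \<le> norm x * lipnorm f" for x
    using P_bound[OF assms, of x] by (simp add: mult.commute)
  fix r x
  let ?Q = "PXY M f"
  define h where "h c = ?Q (c *\<^sub>R x) - c *\<^sub>R ?Q x" for c
  have "h r = 0"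
  proof (rule additive_zero[of h "lipnorm f * norm x + norm (?Q x)"])
    show "h (a + b) = h a + h b" for a b
      unfolding h_def by (simp add: scaleR_add_left P_add[OF assms] algebra_simps)
    show "h 1 = 0" unfolding h_def by simp
    show "norm (h c) \<le> (lipnorm f * norm x + norm (?Q x)) * \<bar>c\<bar>" for c
    proof -
      have "norm (h c) \<le> norm (?Q (c *\<^sub>R x)) + norm (c *\<^sub>R ?Q x)"
        unfolding h_def by (rule norm_triangle_ineq4)
      also have "\<dots> \<le> lipnorm f * norm (c *\<^sub>R x) + \<bar>c\<bar> * norm (?Q x)"
        using P_bound[OF assms, of "c *\<^sub>R x"] by simp
      also have "\<dots> = (lipnorm f * norm x + norm (?Q x)) * \<bar>c\<bar>"
        by (simp add: algebra_simps)
      finally show ?thesis .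
    qed
  qed
  then show "?Q (r *\<^sub>R x) = r *\<^sub>R ?Q x" unfolding h_def by simp
qed

lemma P_comb:
  assumes "lipb f" "lipb g"
  shows "PXY M (\<lambda>x. a *\<^sub>R f x + b *\<^sub>R g x) = (\<lambda>z. a *\<^sub>R PXY M f z + b *\<^sub>R PXY M g z)"
proof
  fix z
  have e: "(\<lambda>x. a *\<^sub>R f (z + x) + b *\<^sub>R g (z + x) - (a *\<^sub>R f x + b *\<^sub>R g x))
      = (\<lambda>x. a *\<^sub>R (f (z + x) - f x) + b *\<^sub>R (g (z + x) - g x))"
    by (simp add: algebra_simps)
  show "PXY M (\<lambda>x. a *\<^sub>R f x + b *\<^sub>R g x) z = a *\<^sub>R PXY M f z + b *\<^sub>R PXY M g z"
    unfolding PXY_def e by (rule M_lin[OF phi_linf[OF assms(1)] phi_linf[OF assms(2)]])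
qed

lemma P_id:
  assumes "bounded_linear T"
  shows "PXY M T = T"
proof
  fix z
  have "(\<lambda>x. T (z + x) - T x) = (\<lambda>_. T z)" using assms by (simp add: linear_simps)
  then show "PXY M T z = T z" unfolding PXY_def by (simp add: M_const)
qed

end

lemma Lin_Lip0: "bounded_linear T \<Longrightarrow> T \<in> Lip0"
  unfolding Lip0_iff using lipb_bl linear_0 bounded_linear.linear by blast

theorem mainTheorem3:
  fixes M :: "('a::banach \<Rightarrow> 'b::banach) \<Rightarrow> 'b"
    and J :: "'b \<Rightarrow> ('z::banach \<Rightarrow>\<^sub>L real)"
  assumes "dual_space_via J"
    and "gen_inv_mean M"
  defines "\<Phi> \<equiv> (\<lambda>f. (PXY M f, \<lambda>x. f x - PXY M f x))"
  shows "bij_betw \<Phi> Lip0 (Lin \<times> kerP M)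
    \<and> (\<forall>f\<in>Lip0. \<forall>g\<in>Lip0. \<forall>a b::real.
          \<Phi> (\<lambda>x. a *\<^sub>R f x + b *\<^sub>R g x) =
            ((\<lambda>x. a *\<^sub>R fst (\<Phi> f) x + b *\<^sub>R fst (\<Phi> g) x),
             (\<lambda>x. a *\<^sub>R snd (\<Phi> f) x + b *\<^sub>R snd (\<Phi> g) x)))
    \<and> (\<exists>c C. 0 < c \<and> 0 < C \<and>
          (\<forall>f\<in>Lip0. c * lipnorm f \<le> sum1norm (\<Phi> f) \<and> sum1norm (\<Phi> f) \<le> C * lipnorm f))"
proof -
  note gim = assms(2)
  have diff_eq: "(\<lambda>x. f x - g x) = (\<lambda>x. 1 *\<^sub>R f x + (-1) *\<^sub>R g x)" for f g :: "'a \<Rightarrow> 'b"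
    by simp
  have lipb_diff: "lipb (\<lambda>x. f x - g x)" if "lipb f" "lipb g" for f g :: "'a \<Rightarrow> 'b"
    unfolding diff_eq by (rule lipb_comb[OF that])
  have Pbl: "bounded_linear (PXY M f)" if "f \<in> Lip0" for f
    using P_bl[OF gim] that unfolding Lip0_iff by blast
  have PP: "PXY M (PXY M f) = PXY M f" if "f \<in> Lip0" for f
    by (rule P_id[OF gim Pbl[OF that]])
  have Pdiff: "PXY M (\<lambda>x. f x - g x) = (\<lambda>z. PXY M f z - PXY M g z)" if "lipb f" "lipb g" for f g :: "'a \<Rightarrow> 'b"
    unfolding diff_eq P_comb[OF gim that] by simp
  have ker: "(\<lambda>x. f x - PXY M f x) \<in> kerP M" if f: "f \<in> Lip0" for f
  proof -
    have lf: "lipb f" "f 0 = 0" using f unfolding Lip0_iff by auto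
    have lp: "lipb (PXY M f)" using lipb_bl[OF Pbl[OF f]] .
    have "PXY M f 0 = 0" using Pbl[OF f] by (simp add: linear_simps)
    then have "(\<lambda>x. f x - PXY M f x) \<in> Lip0" unfolding Lip0_iff using lf lipb_diff[OF lf(1) lp] by simp
    moreover have "PXY M (\<lambda>x. f x - PXY M f x) = (\<lambda>_. 0)"
      unfolding Pdiff[OF lf(1) lp] PP[OF f] by simp
    ultimately show ?thesis unfolding kerP_def by blast
  qed
  have bij: "bij_betw \<Phi> Lip0 (Lin \<times> kerP M)"
    unfolding bij_betw_def
  proof (intro conjI)
    show "inj_on \<Phi> Lip0"
    proof (rule inj_onI)
      fix f g assume "\<Phi> f = \<Phi> g"
      then have e1: "PXY M f = PXY M g" and e2: "(\<lambda>x. f x - PXY M f x) = (\<lambda>x. g x - PXY M g x)"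
        unfolding \<Phi>_def by auto
      show "f = g"
      proof
        fix x
        have "f x - PXY M f x = g x - PXY M g x" using fun_cong[OF e2, of x] by simp
        then show "f x = g x" using e1 by simp
      qed
    qed
    show "\<Phi> ` Lip0 = Lin \<times> kerP M"
    proof
      show "\<Phi> ` Lip0 \<subseteq> Lin \<times> kerP M"
        unfolding \<Phi>_def Lin_def using Pbl ker by auto
      show "Lin \<times> kerP M \<subseteq> \<Phi> ` Lip0"
      proof
        fix p :: "('a \<Rightarrow> 'b) \<times> ('a \<Rightarrow> 'b)" assume "p \<in> Lin \<times> kerP M"
        then obtain T g where p: "p = (T, g)" and T: "bounded_linear T" and g: "g \<in> Lip0"
          and Pg: "PXY M g = (\<lambda>_. 0)"
          unfolding Lin_def kerP_def by auto
        have lT: "lipb T" "T 0 = 0" using Lin_Lip0[OF T] unfolding Lip0_iff by auto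
        have lg: "lipb g" "g 0 = 0" using g unfolding Lip0_iff by auto
        let ?f = "\<lambda>x::'a. T x + g x"
        have fe: "?f = (\<lambda>x. 1 *\<^sub>R T x + 1 *\<^sub>R g x)" by simp
        have "lipb (\<lambda>x. 1 *\<^sub>R T x + 1 *\<^sub>R g x)" by (rule lipb_comb[OF lT(1) lg(1)])
        then have "?f \<in> Lip0" unfolding Lip0_iff using lT lg by simp
        moreover have "PXY M ?f = T"
          unfolding fe P_comb[OF gim lT(1) lg(1)] Pg P_id[OF gim T] by simp
        ultimately show "p \<in> \<Phi> ` Lip0" unfolding p \<Phi>_def
          by (intro image_eqI[of _ _ ?f]) auto
      qed
    qed
  qed
  have lin: "\<forall>f\<in>Lip0. \<forall>g\<in>Lip0. \<forall>a b::real.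
          \<Phi> (\<lambda>x. a *\<^sub>R f x + b *\<^sub>R g x) =
            ((\<lambda>x. a *\<^sub>R fst (\<Phi> f) x + b *\<^sub>R fst (\<Phi> g) x),
             (\<lambda>x. a *\<^sub>R snd (\<Phi> f) x + b *\<^sub>R snd (\<Phi> g) x))"
  proof (intro ballI allI)
    fix f g :: "'a \<Rightarrow> 'b" and a b :: real assume "f \<in> Lip0" "g \<in> Lip0"
    then have l: "lipb f" "lipb g" unfolding Lip0_iff by auto
    show "\<Phi> (\<lambda>x. a *\<^sub>R f x + b *\<^sub>R g x) =
            ((\<lambda>x. a *\<^sub>R fst (\<Phi> f) x + b *\<^sub>R fst (\<Phi> g) x),
             (\<lambda>x. a *\<^sub>R snd (\<Phi> f) x + b *\<^sub>R snd (\<Phi> g) x))"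
      unfolding \<Phi>_def P_comb[OF gim l] by (simp add: algebra_simps)
  qed
  have norms: "1 * lipnorm f \<le> sum1norm (\<Phi> f) \<and> sum1norm (\<Phi> f) \<le> 3 * lipnorm f" if f: "f \<in> Lip0" for f
  proof -
    let ?P = "PXY M f" and ?g = "\<lambda>x. f x - PXY M f x"
    have lf: "lipb f" using f unfolding Lip0_iff by auto
    have bl: "bounded_linear ?P" using Pbl[OF f] .
    have lp: "lipb ?P" using lipb_bl[OF bl] .
    have lg: "lipb ?g" using lipb_diff[OF lf lp] .
    have s: "sum1norm (\<Phi> f) = onorm ?P + lipnorm ?g" unfolding sum1norm_def \<Phi>_def by simp
    have L0: "0 \<le> lipnorm f" using lipnorm_ge(2)[OF lf] .
    have on: "onorm ?P \<le> lipnorm f"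
      by (rule onorm_bound[OF L0]) (use P_bound[OF gim lf] in auto)
    have Pxy: "norm (?P x - ?P y) \<le> lipnorm f * norm (x - y)" for x y
    proof -
      have "?P x - ?P y = ?P (x - y)" using bl by (simp add: linear_simps)
      then show ?thesis using P_bound[OF gim lf, of "x - y"] by simp
    qed
    have up: "lipnorm ?g \<le> 2 * lipnorm f"
    proof (rule lipnorm_le)
      show "0 \<le> 2 * lipnorm f" using L0 by simp
      fix x y
      have "norm (?g x - ?g y) = norm ((f x - f y) - (?P x - ?P y))" by (simp add: algebra_simps)
      also have "\<dots> \<le> norm (f x - f y) + norm (?P x - ?P y)" by (rule norm_triangle_ineq4)
      also have "\<dots> \<le> lipnorm f * norm (x - y) + lipnorm f * norm (x - y)"
        by (intro add_mono lipnorm_ge(1)[OF lf] Pxy)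
      finally show "norm (?g x - ?g y) \<le> 2 * lipnorm f * norm (x - y)" by simp
    qed
    have low: "lipnorm f \<le> onorm ?P + lipnorm ?g"
    proof (rule lipnorm_le)
      show "0 \<le> onorm ?P + lipnorm ?g" using onorm_pos_le[OF bl] lipnorm_ge(2)[OF lg] by simp
      fix x y
      have "norm (f x - f y) = norm ((?P x - ?P y) + (?g x - ?g y))" by (simp add: algebra_simps)
      also have "\<dots> \<le> norm (?P x - ?P y) + norm (?g x - ?g y)" by (rule norm_triangle_ineq)
      also have "\<dots> \<le> onorm ?P * norm (x - y) + lipnorm ?g * norm (x - y)"
      proof (intro add_mono lipnorm_ge(1)[OF lg])
        have "?P x - ?P y = ?P (x - y)" using bl by (simp add: linear_simps)
        then show "norm (?P x - ?P y) \<le> onorm ?P * norm (x - y)" using onorm[OF bl, of "x - y"] by simp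
      qed
      finally show "norm (f x - f y) \<le> (onorm ?P + lipnorm ?g) * norm (x - y)"
        by (simp add: distrib_right)
    qed
    show ?thesis unfolding s using on up low by simp
  qed
  show ?thesis
    using bij lin norms by (intro conjI exI[of _ "1::real"] exI[of _ "3::real"]) auto
qed

end
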